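(* Let $A\in\mathbb R^{m\times N}$, let $\mathcal B=(\mathcal B_1,\dots,\mathcal B_B)$ be a block structure with weights $\omega=(\omega_1,\dots,\omega_B)$, $\omega_i\ge1$. Let $s\ge2\|\omega\|_\infty^2$ and suppose $A$ satisfies the WBRIP of order $2s$ with constant $\delta_{2s}<\frac{1}{2\sqrt2+1}$. Then $A$ satisfies the $\ell^2_\omega$-BRNSP of order $s$ with constants $\rho=\frac{2\sqrt2\,\delta_{2s}}{1-\delta_{2s}}$ and $\tau=\frac{\sqrt{1+\delta_{2s}}}{1-\delta_{2s}}$.
   Context: Block structure: $\mathcal B=(\mathcal B_1,\dots,\mathcal B_B)$ partition of $\{1,\dots,N\}$; $x[b]=x[\mathcal B_b]$; for $S\subseteq\{1,\dots,B\}$, $x[S]$ equals $x$ on blocks in $S$ and $0$ elsewhere, $S^c$ its complement. Weights $\omega_b\ge1$, $\|\omega\|_\infty=\max_b\omega_b$, $\omega(S)=\sum_{b\in S}\omega_b^2$. $\|x\|_{2,p}^{(\omega)}=\big(\sum_b\omega_b^{2-p}\|x[b]\|_2^p\big)^{1/p}$. $\|x\|_0^{(\omega)}=\omega(\{b:x[b]\ne0\})$. Definition ($\ell^p_\omega$-BRNSP): $A$ satisfies the weighted block $\ell^p$ robust null space property of order $s$ with constants $\rho\in(0,1)$, $\tau>0$ if $\|x[S]\|_{2,p}^{(\omega)}\le\frac{\rho}{s^{1-1/p}}\|x[S^c]\|_{2,1}^{(\omega)}+\tau\|Ax\|_2$ for all $x\in\mathbb R^N$ and all $S$ with $\omega(S)\le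 s$. Definition (WBRIP): $A$ satisfies the weighted block restricted isometry property of order $t\ge\|\omega\|_\infty$ with constant $\delta\in(0,1)$ if $(1-\delta)\|x\|_2^2\le\|Ax\|_2^2\le(1+\delta)\|x\|_2^2$ for all $x$ with $\|x\|_0^{(\omega)}\le t$; the smallest such $\delta$ is denoted $\delta_t$. *)

theory Defs
  imports "HOL-Analysis.Analysis"
begin

text \<open>A block structure is a surjective map \<open>blk :: 'n \<Rightarrow> 'b\<close>, block b being
  the (nonempty) set of indices i with blk i = b.\<close>

definition block_structure :: "('n::finite \<Rightarrow> 'b::finite) \<Rightarrow> bool" where
  "block_structure blk \<longleftrightarrow> surj blk"

definition bnorm :: "('n::finite \<Rightarrow> 'b) \<Rightarrow> real ^ 'n \<Rightarrow> 'b \<Rightarrow> real" where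
  "bnorm blk x b = sqrt (\<Sum>i\<in>{i. blk i = b}. (x $ i)\<^sup>2)"

definition brestrict :: "('n::finite \<Rightarrow> 'b) \<Rightarrow> 'b set \<Rightarrow> real ^ 'n \<Rightarrow> real ^ 'n" where
  "brestrict blk S x = (\<chi> i. if blk i \<in> S then x $ i else 0)"

definition wset :: "('b \<Rightarrow> real) \<Rightarrow> 'b set \<Rightarrow> real" where
  "wset \<omega> S = (\<Sum>b\<in>S. (\<omega> b)\<^sup>2)"

definition wmax :: "('b::finite \<Rightarrow> real) \<Rightarrow> real" where
  "wmax \<omega> = Max (range \<omega>)"

definition wnorm :: "('n::finite \<Rightarrow> 'b::finite) \<Rightarrow> ('b \<Rightarrow> real) \<Rightarrow> real \<Rightarrow> real ^ 'n \<Rightarrow> real" where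
  "wnorm blk \<omega> p x = (\<Sum>b\<in>UNIV. \<omega> b powr (2 - p) * bnorm blk x b powr p) powr (1 / p)"

definition wsparsity :: "('n::finite \<Rightarrow> 'b::finite) \<Rightarrow> ('b \<Rightarrow> real) \<Rightarrow> real ^ 'n \<Rightarrow> real" where
  "wsparsity blk \<omega> x = wset \<omega> {b. brestrict blk {b} x \<noteq> 0}"

definition brnsp :: "('n::finite \<Rightarrow> 'b::finite) \<Rightarrow> ('b \<Rightarrow> real) \<Rightarrow> real \<Rightarrow> real ^ 'n ^ 'm \<Rightarrow>
    real \<Rightarrow> real \<Rightarrow> real \<Rightarrow> bool" where
  "brnsp blk \<omega> p A s \<rho> \<tau> \<longleftrightarrow> 0 < \<rho> \<and> \<rho> < 1 \<and> 0 < \<tau> \<and>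
     (\<forall>x S. wset \<omega> S \<le> s \<longrightarrow>
        wnorm blk \<omega> p (brestrict blk S x)
          \<le> \<rho> / s powr (1 - 1 / p) * wnorm blk \<omega> 1 (brestrict blk (- S) x) + \<tau> * norm (A *v x))"

definition wbrip_ineq :: "('n::finite \<Rightarrow> 'b::finite) \<Rightarrow> ('b \<Rightarrow> real) \<Rightarrow> real ^ 'n ^ 'm \<Rightarrow>
    real \<Rightarrow> real \<Rightarrow> bool" where
  "wbrip_ineq blk \<omega> A t \<delta> \<longleftrightarrow>
     (\<forall>x. wsparsity blk \<omega> x \<le> t \<longrightarrow>
        (1 - \<delta>) * (norm x)\<^sup>2 \<le> (norm (A *v x))\<^sup>2 \<and> (norm (A *v x))\<^sup>2 \<le> (1 + \<delta>) * (norm x)\<^sup>2)"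

definition wbrip :: "('n::finite \<Rightarrow> 'b::finite) \<Rightarrow> ('b \<Rightarrow> real) \<Rightarrow> real ^ 'n ^ 'm \<Rightarrow>
    real \<Rightarrow> real \<Rightarrow> bool" where
  "wbrip blk \<omega> A t \<delta> \<longleftrightarrow> wmax \<omega> \<le> t \<and> 0 < \<delta> \<and> \<delta> < 1 \<and> wbrip_ineq blk \<omega> A t \<delta>"

definition wbrip_const :: "('n::finite \<Rightarrow> 'b::finite) \<Rightarrow> ('b \<Rightarrow> real) \<Rightarrow> real ^ 'n ^ 'm \<Rightarrow>
    real \<Rightarrow> real" where
  "wbrip_const blk \<omega> A t = Inf {\<delta>. 0 \<le> \<delta> \<and> wbrip_ineq blk \<omega> A t \<delta>}"

end

theory Submission imports Defs begin

lemma norm_brestrict_sq: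
  fixes x :: "real ^ 'n::finite" and blk :: "'n \<Rightarrow> 'b::finite"
  shows "(norm (brestrict blk T x))\<^sup>2 = (\<Sum>b\<in>T. (bnorm blk x b)\<^sup>2)"
proof -
  have "(norm (brestrict blk T x))\<^sup>2 = (\<Sum>i\<in>UNIV. (brestrict blk T x $ i)\<^sup>2)"
    unfolding power2_norm_eq_inner inner_vec_def by (simp add: power2_eq_square)
  also have "\<dots> = (\<Sum>i\<in>{i. blk i \<in> T}. (x $ i)\<^sup>2)"
    by (rule sum.mono_neutral_cong_right) (auto simp: brestrict_def)
  also have "\<dots> = (\<Sum>b\<in>T. \<Sum>i\<in>{i. i \<in> {i. blk i \<in> T} \<and> blk i = b}. (x $ i)\<^sup>2)"
    by (rule sum.group[symmetric]) auto
  also have "\<dots> = (\<Sum>b\<in>T. (bnorm blk x b)\<^sup>2)"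
  proof (rule sum.cong)
    fix b assume "b \<in> T"
    then have "{i. i \<in> {i. blk i \<in> T} \<and> blk i = b} = {i. blk i = b}" by auto
    then show "(\<Sum>i\<in>{i. i \<in> {i. blk i \<in> T} \<and> blk i = b}. (x $ i)\<^sup>2) = (bnorm blk x b)\<^sup>2"
      by (simp add: bnorm_def sum_nonneg)
  qed simp
  finally show ?thesis .
qed

lemma norm_brestrict:
  fixes x :: "real ^ 'n::finite" and blk :: "'n \<Rightarrow> 'b::finite"
  shows "norm (brestrict blk T x) = sqrt (\<Sum>b\<in>T. (bnorm blk x b)\<^sup>2)"
  using norm_brestrict_sq[of blk T x] by (metis norm_ge_zero real_sqrt_abs abs_of_nonneg)

lemma bnorm_nonneg: "0 \<le> bnorm blk x b"
  by (simp add: bnorm_def sum_nonneg)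

lemma bnorm_brestrict: "bnorm blk (brestrict blk T x) b = (if b \<in> T then bnorm blk x b else 0)"
  by (auto simp: bnorm_def brestrict_def)

lemma brestrict_add:
  "T1 \<inter> T2 = {} \<Longrightarrow> brestrict blk T1 x + brestrict blk T2 x = brestrict blk (T1 \<union> T2) x"
  by (auto simp: brestrict_def vec_eq_iff)

lemma brestrict_UNIV: "brestrict blk UNIV x = x"
  by (auto simp: brestrict_def vec_eq_iff)

lemma brestrict_empty: "brestrict blk {} x = 0"
  by (auto simp: brestrict_def vec_eq_iff)

lemma inner_brestrict_disj:
  "T1 \<inter> T2 = {} \<Longrightarrow> inner (brestrict blk T1 x) (brestrict blk T2 y) = 0"
  unfolding inner_vec_def brestrict_def by (rule sum.neutral) auto

lemma wset_mono:
  fixes \<omega> :: "'b::finite \<Rightarrow> real"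
  shows "T \<subseteq> U \<Longrightarrow> wset \<omega> T \<le> wset \<omega> U"
  unfolding wset_def by (rule sum_mono2) auto

lemma wset_union:
  fixes \<omega> :: "'b::finite \<Rightarrow> real"
  shows "wset \<omega> (T \<union> U) \<le> wset \<omega> T + wset \<omega> U"
proof -
  have "0 \<le> (\<Sum>b\<in>T \<inter> U. (\<omega> b)\<^sup>2)" by (rule sum_nonneg) simp
  then show ?thesis unfolding wset_def by (simp add: sum_Un)
qed

lemma wsparsity_le:
  fixes \<omega> :: "'b::finite \<Rightarrow> real" and blk :: "'n::finite \<Rightarrow> 'b"
  assumes "\<forall>i. blk i \<notin> T \<longrightarrow> v $ i = 0"
  shows "wsparsity blk \<omega> v \<le> wset \<omega> T"
  unfolding wsparsity_def
proof (rule wset_mono, rule subsetI, rule ccontr)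
  fix b assume b: "b \<in> {b. brestrict blk {b} v \<noteq> 0}" "b \<notin> T"
  then obtain i where "(brestrict blk {b} v) $ i \<noteq> 0" by (auto simp: vec_eq_iff)
  then have "blk i = b" "v $ i \<noteq> 0" by (auto simp: brestrict_def split: if_splits)
  then show False using assms b(2) by auto
qed

lemma wnorm2:
  fixes \<omega> :: "'b::finite \<Rightarrow> real" and blk :: "'n::finite \<Rightarrow> 'b"
  assumes "\<forall>b. 0 < \<omega> b"
  shows "wnorm blk \<omega> 2 y = norm y"
proof -
  have "wnorm blk \<omega> 2 y = (\<Sum>b\<in>UNIV. (bnorm blk y b)\<^sup>2) powr (1/2)"
  proof -
    have ne: "\<And>b. \<omega> b \<noteq> 0" using assms by (metis less_irrefl)
    show ?thesis unfolding wnorm_def by (simp add: bnorm_nonneg ne)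
  qed
  also have "\<dots> = ((norm y)\<^sup>2) powr (1/2)"
    using norm_brestrict_sq[of blk UNIV y] by (simp add: brestrict_UNIV)
  also have "\<dots> = norm y" by (simp add: powr_half_sqrt)
  finally show ?thesis .
qed

lemma wnorm1:
  fixes \<omega> :: "'b::finite \<Rightarrow> real" and blk :: "'n::finite \<Rightarrow> 'b"
  assumes "\<forall>b. 0 < \<omega> b"
  shows "wnorm blk \<omega> 1 (brestrict blk T x) = (\<Sum>b\<in>T. \<omega> b * bnorm blk x b)"
proof -
  have "wnorm blk \<omega> 1 (brestrict blk T x) = \<bar>\<Sum>b\<in>UNIV. \<bar>\<omega> b\<bar> * \<bar>bnorm blk (brestrict blk T x) b\<bar>\<bar>"
    unfolding wnorm_def by simp
  also have "\<dots> = \<bar>\<Sum>b\<in>UNIV. (if b \<in> T then \<omega> b * bnorm blk x b else 0)\<bar>"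
    using assms by (intro arg_cong[where f=abs] sum.cong) (auto simp: bnorm_brestrict bnorm_nonneg abs_of_pos)
  also have "\<dots> = \<bar>\<Sum>b\<in>T. \<omega> b * bnorm blk x b\<bar>"
    by (simp add: sum.inter_restrict[symmetric])
  also have "\<dots> = (\<Sum>b\<in>T. \<omega> b * bnorm blk x b)"
    using assms by (intro abs_of_nonneg sum_nonneg) (simp add: bnorm_nonneg less_imp_le)
  finally show ?thesis .
qed

lemma rip_pair:
  fixes A :: "real^'n^'m" and blk :: "'n::finite \<Rightarrow> 'b::finite" and \<omega> :: "'b \<Rightarrow> real"
  assumes rip: "wbrip_ineq blk \<omega> A t \<delta>"
    and T12: "T1 \<inter> T2 = {}" and wt: "wset \<omega> (T1 \<union> T2) \<le> t"
  shows "\<bar>inner (A *v brestrict blk T1 x) (A *v brestrict blk T2 x)\<bar>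
           \<le> \<delta> * norm (brestrict blk T1 x) * norm (brestrict blk T2 x)"
proof -
  define y where "y = brestrict blk T1 x"
  define z where "z = brestrict blk T2 x"
  define a where "a = norm y"
  define b where "b = norm z"
  define p where "p = inner (A *v y) (A *v z)"
  define Q where "Q = b\<^sup>2 * (norm (A *v y))\<^sup>2 + a\<^sup>2 * (norm (A *v z))\<^sup>2"
  define P where "P = a * b * p"
  define D where "D = a\<^sup>2 * b\<^sup>2"
  have yz: "inner y z = 0" using inner_brestrict_disj[OF T12] by (simp add: y_def z_def)
  have R: "(1-\<delta>) * (norm (c *\<^sub>R y + d *\<^sub>R z))\<^sup>2 \<le> (norm (A *v (c *\<^sub>R y + d *\<^sub>R z)))\<^sup>2 \<and>
           (norm (A *v (c *\<^sub>R y + d *\<^sub>R z)))\<^sup>2 \<le> (1+\<delta>) * (norm (c *\<^sub>R y + d *\<^sub>R z))\<^sup>2" for c d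
  proof -
    have "wsparsity blk \<omega> (c *\<^sub>R y + d *\<^sub>R z) \<le> wset \<omega> (T1 \<union> T2)"
      by (rule wsparsity_le) (auto simp: y_def z_def brestrict_def)
    then show ?thesis using rip wt unfolding wbrip_ineq_def by auto
  qed
  have N: "(norm (c *\<^sub>R y + d *\<^sub>R z))\<^sup>2 = c\<^sup>2 * a\<^sup>2 + d\<^sup>2 * b\<^sup>2" for c d
    unfolding power2_norm_eq_inner a_def b_def using yz
    by (simp add: inner_add_left inner_add_right inner_commute algebra_simps power2_eq_square)
  have M: "(norm (A *v (c *\<^sub>R y + d *\<^sub>R z)))\<^sup>2 = c\<^sup>2 * (norm (A *v y))\<^sup>2 + 2 * c * d * p + d\<^sup>2 * (norm (A *v z))\<^sup>2" for c d
    unfolding power2_norm_eq_inner p_def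
    by (simp add: matrix_vector_right_distrib matrix_vector_mult_scaleR inner_add_left inner_add_right
        inner_commute algebra_simps power2_eq_square)
  have e1: "(norm (A *v (b *\<^sub>R y + a *\<^sub>R z)))\<^sup>2 = Q + 2 * P"
    using M[of b a] by (simp add: Q_def P_def algebra_simps)
  have e2: "(norm (A *v (b *\<^sub>R y + (-a) *\<^sub>R z)))\<^sup>2 = Q - 2 * P"
    using M[of b "-a"] by (simp add: Q_def P_def algebra_simps)
  have f1: "(norm (b *\<^sub>R y + a *\<^sub>R z))\<^sup>2 = 2 * D"
    using N[of b a] by (simp add: D_def algebra_simps)
  have f2: "(norm (b *\<^sub>R y + (-a) *\<^sub>R z))\<^sup>2 = 2 * D"
    using N[of b "-a"] by (simp add: D_def algebra_simps)
  have i1: "(1-\<delta>) * (2*D) \<le> Q + 2 * P" "Q + 2 * P \<le> (1+\<delta>) * (2*D)"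
    using R[of b a] e1 f1 by auto
  have i2: "(1-\<delta>) * (2*D) \<le> Q - 2 * P" "Q - 2 * P \<le> (1+\<delta>) * (2*D)"
    using R[of b "-a"] e2 f2 by auto
  have "4 * P \<le> (1+\<delta>) * (2*D) - (1-\<delta>) * (2*D)" using i1 i2 by linarith
  also have "\<dots> = 4 * (\<delta> * D)" by (simp add: algebra_simps)
  finally have h1: "P \<le> \<delta> * D" by simp
  have "- 4 * P \<le> (1+\<delta>) * (2*D) - (1-\<delta>) * (2*D)" using i1 i2 by linarith
  also have "\<dots> = 4 * (\<delta> * D)" by (simp add: algebra_simps)
  finally have h2: "- P \<le> \<delta> * D" by (simp add: mult.commute)
  have habs: "a * b * \<bar>p\<bar> \<le> a * b * (\<delta> * a * b)"
  proof -
    have ab: "0 \<le> a * b" by (simp add: a_def b_def)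
    have "\<bar>P\<bar> \<le> \<delta> * D" using h1 h2 by linarith
    moreover have "\<bar>P\<bar> = a * b * \<bar>p\<bar>" by (simp add: P_def abs_mult a_def b_def)
    moreover have "\<delta> * D = a * b * (\<delta> * a * b)" by (simp add: D_def power2_eq_square algebra_simps)
    ultimately show ?thesis by simp
  qed
  have "\<bar>p\<bar> \<le> \<delta> * a * b"
  proof (cases "a = 0 \<or> b = 0")
    case True
    then have "y = 0 \<or> z = 0" by (auto simp: a_def b_def)
    then have "p = 0" by (auto simp: p_def)
    moreover have "\<delta> * a * b = 0" using True by auto
    ultimately show ?thesis by (metis abs_zero order_refl)
  next
    case False
    then have "0 < a * b" by (simp add: a_def b_def)
    then show ?thesis using habs by (simp add: mult_le_cancel_left_pos)
  qed
  then show ?thesis by (simp add: p_def a_def b_def y_def z_def)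
qed

lemma chunk:
  fixes R :: "'b set" and w r :: "'b \<Rightarrow> real" and s W :: real
  assumes fin: "finite R" and wW: "\<forall>b. w b \<le> W" and Ws: "W \<le> s" and s0: "0 \<le> s"
  shows "\<exists>C \<subseteq> R. sum w C \<le> s \<and> (\<forall>b\<in>C. \<forall>c\<in>R-C. r c \<le> r b) \<and>
           (R - C \<noteq> {} \<longrightarrow> s - W < sum w C) \<and> (R \<noteq> {} \<longrightarrow> C \<noteq> {})"
proof -
  define P where "P = {C. C \<subseteq> R \<and> sum w C \<le> s \<and> (\<forall>b\<in>C. \<forall>c\<in>R-C. r c \<le> r b)}"
  have finP: "finite P" unfolding P_def using fin by (auto intro: finite_subset[of _ "Pow R"])
  have "{} \<in> P" unfolding P_def using s0 by auto
  then have ne: "card ` P \<noteq> {}" by auto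
  define k where "k = Max (card ` P)"
  have "k \<in> card ` P" unfolding k_def using finP ne by (intro Max_in) auto
  then obtain C where C: "C \<in> P" "card C = k" by auto
  have maxC: "card C' \<le> card C" if "C' \<in> P" for C'
    using C(2) finP that unfolding k_def by (auto intro: Max_ge)
  have sC: "sum w C \<le> s" and CR: "C \<subseteq> R" and ordC: "\<forall>b\<in>C. \<forall>c\<in>R-C. r c \<le> r b"
    using C(1) unfolding P_def by auto
  have big: "s - W < sum w C" if ne2: "R - C \<noteq> {}"
  proof -
    have finRC: "finite (R - C)" using fin by auto
    define mx where "mx = Max (r ` (R - C))"
    have "mx \<in> r ` (R - C)" unfolding mx_def using finRC ne2 by (intro Max_in) auto
    then obtain c where c: "c \<in> R - C" "r c = mx" by auto
    have mxge: "r d \<le> r c" if "d \<in> R - C" for d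
      using c(2) finRC that unfolding mx_def by (auto intro: Max_ge)
    have "insert c C \<notin> P"
    proof
      assume "insert c C \<in> P"
      then have "card (insert c C) \<le> card C" by (rule maxC)
      moreover have "card (insert c C) = Suc (card C)"
        using c(1) finite_subset[OF CR fin] by auto
      ultimately show False by simp
    qed
    moreover have "insert c C \<subseteq> R" using c(1) CR by auto
    moreover have "\<forall>b\<in>insert c C. \<forall>d\<in>R - insert c C. r d \<le> r b"
      using ordC mxge by auto
    ultimately have "s < sum w (insert c C)" unfolding P_def by auto
    also have "\<dots> = w c + sum w C" using c(1) finite_subset[OF CR fin] by auto
    finally show ?thesis using wW[rule_format, of c] by linarith
  qed
  have "R \<noteq> {} \<longrightarrow> C \<noteq> {}"
  proof
    assume "R \<noteq> {}"
    show "C \<noteq> {}"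
    proof
      assume "C = {}"
      then have "s - W < 0" using big \<open>R \<noteq> {}\<close> by auto
      then show False using Ws by linarith
    qed
  qed
  then show ?thesis using sC CR ordC big by blast
qed

lemma min_chunk:
  fixes \<omega> n :: "'b::finite \<Rightarrow> real" and C :: "'b set"
  assumes ne: "C \<noteq> {}" and s: "0 < s" and om: "\<forall>b. 0 < \<omega> b" and nn: "\<forall>b. 0 \<le> n b"
    and big: "s / 2 < wset \<omega> C"
  shows "0 \<le> Min ((\<lambda>b. n b / \<omega> b) ` C)"
    and "sqrt s * Min ((\<lambda>b. n b / \<omega> b) ` C) \<le> 2 / sqrt s * (\<Sum>b\<in>C. \<omega> b * n b)"
proof -
  define m where "m = Min ((\<lambda>b. n b / \<omega> b) ` C)"
  have fin: "finite C" by simp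
  have mle: "m \<le> n b / \<omega> b" if "b \<in> C" for b
    unfolding m_def using that fin by (intro Min_le) auto
  have "m \<in> (\<lambda>b. n b / \<omega> b) ` C" unfolding m_def using fin ne by (intro Min_in) auto
  then obtain b0 where "b0 \<in> C" "m = n b0 / \<omega> b0" by auto
  then show m0: "0 \<le> Min ((\<lambda>b. n b / \<omega> b) ` C)" using om nn unfolding m_def[symmetric]
    by (simp add: less_imp_le)
  have "m * wset \<omega> C = (\<Sum>b\<in>C. m * (\<omega> b)\<^sup>2)" by (simp add: wset_def sum_distrib_left)
  also have "\<dots> \<le> (\<Sum>b\<in>C. \<omega> b * n b)"
  proof (rule sum_mono)
    fix b assume "b \<in> C"
    then have "m \<le> n b / \<omega> b" by (rule mle)
    then have "m * (\<omega> b)\<^sup>2 \<le> n b / \<omega> b * (\<omega> b)\<^sup>2"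
      by (rule mult_right_mono) simp
    also have "\<dots> = \<omega> b * n b" using om[rule_format, of b] by (simp add: power2_eq_square)
    finally show "m * (\<omega> b)\<^sup>2 \<le> \<omega> b * n b" .
  qed
  finally have h: "m * wset \<omega> C \<le> (\<Sum>b\<in>C. \<omega> b * n b)" .
  have "m * (s / 2) \<le> m * wset \<omega> C"
    using m0 big unfolding m_def[symmetric] by (intro mult_left_mono) auto
  moreover have "m * (s / 2) = s * m / 2" by simp
  ultimately have h2: "s * m \<le> 2 * (\<Sum>b\<in>C. \<omega> b * n b)" using h by linarith
  have sds: "s / sqrt s = sqrt s" using s by (simp add: real_div_sqrt)
  have "sqrt s * m = s * m / sqrt s" by (metis sds times_divide_eq_left)
  also have "\<dots> \<le> 2 * (\<Sum>b\<in>C. \<omega> b * n b) / sqrt s"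
    using h2 s by (intro divide_right_mono) auto
  finally show "sqrt s * Min ((\<lambda>b. n b / \<omega> b) ` C) \<le> 2 / sqrt s * (\<Sum>b\<in>C. \<omega> b * n b)"
    unfolding m_def[symmetric] by simp
qed

lemma Gbound:
  fixes f :: "'b::finite set \<Rightarrow> real" and \<omega> n :: "'b \<Rightarrow> real"
  assumes add: "\<forall>C D. C \<inter> D = {} \<longrightarrow> f (C \<union> D) = f C + f D"
    and bnd: "\<forall>C. C \<subseteq> R0 \<and> wset \<omega> C \<le> s \<longrightarrow> \<bar>f C\<bar> \<le> K * sqrt (\<Sum>b\<in>C. (n b)\<^sup>2)"
    and K: "0 \<le> K" and om: "\<forall>b. 1 \<le> \<omega> b" and nn: "\<forall>b. 0 \<le> n b" and s: "0 < s"
    and oms: "\<forall>b. (\<omega> b)\<^sup>2 \<le> s / 2"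
  shows "R \<subseteq> R0 \<Longrightarrow> 0 \<le> M \<Longrightarrow> \<forall>b\<in>R. n b / \<omega> b \<le> M \<Longrightarrow>
           \<bar>f R\<bar> \<le> K * (sqrt s * M + 2 / sqrt s * (\<Sum>b\<in>R. \<omega> b * n b))"
proof (induction "card R" arbitrary: R M rule: less_induct)
  case less
  have om0: "\<forall>b. 0 < \<omega> b" using om by (auto intro: less_le_trans[of 0 1])
  have f0: "f {} = 0" using add[rule_format, of "{}" "{}"] by simp
  have sumR0: "0 \<le> (\<Sum>b\<in>R. \<omega> b * n b)" using om0 nn by (intro sum_nonneg) (simp add: less_imp_le)
  have rhs0: "0 \<le> K * (sqrt s * M + 2 / sqrt s * (\<Sum>b\<in>R. \<omega> b * n b))"
    using K less.prems(2) sumR0 s by (intro mult_nonneg_nonneg add_nonneg_nonneg) auto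
  show ?case
  proof (cases "R = {}")
    case True
    then show ?thesis using f0 rhs0 by simp
  next
    case False
    have "\<exists>C \<subseteq> R. sum (\<lambda>b. (\<omega> b)\<^sup>2) C \<le> s \<and> (\<forall>b\<in>C. \<forall>c\<in>R-C. n c / \<omega> c \<le> n b / \<omega> b) \<and>
           (R - C \<noteq> {} \<longrightarrow> s - s/2 < sum (\<lambda>b. (\<omega> b)\<^sup>2) C) \<and> (R \<noteq> {} \<longrightarrow> C \<noteq> {})"
      by (rule chunk) (use oms s in auto)
    then obtain C where C: "C \<subseteq> R" "wset \<omega> C \<le> s" "\<forall>b\<in>C. \<forall>c\<in>R-C. n c / \<omega> c \<le> n b / \<omega> b"
      "R - C \<noteq> {} \<longrightarrow> s / 2 < wset \<omega> C" "C \<noteq> {}"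
      using False unfolding wset_def by auto
    have fC: "\<bar>f C\<bar> \<le> K * (sqrt s * M)"
    proof -
      have "\<bar>f C\<bar> \<le> K * sqrt (\<Sum>b\<in>C. (n b)\<^sup>2)" using bnd C(1,2) less.prems(1) by auto
      also have "sqrt (\<Sum>b\<in>C. (n b)\<^sup>2) \<le> sqrt s * M"
      proof -
        have "(\<Sum>b\<in>C. (n b)\<^sup>2) \<le> (\<Sum>b\<in>C. M\<^sup>2 * (\<omega> b)\<^sup>2)"
        proof (rule sum_mono)
          fix b assume "b \<in> C"
          then have "n b / \<omega> b \<le> M" using less.prems(3) C(1) by auto
          then have "n b \<le> M * \<omega> b" using om0[rule_format, of b] by (simp add: divide_le_eq)
          then have "(n b)\<^sup>2 \<le> (M * \<omega> b)\<^sup>2" using nn by (intro power_mono) auto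
          then show "(n b)\<^sup>2 \<le> M\<^sup>2 * (\<omega> b)\<^sup>2" by (simp add: power_mult_distrib)
        qed
        also have "\<dots> = M\<^sup>2 * wset \<omega> C" by (simp add: wset_def sum_distrib_left)
        also have "\<dots> \<le> M\<^sup>2 * s" using C(2) by (intro mult_left_mono) auto
        finally have "sqrt (\<Sum>b\<in>C. (n b)\<^sup>2) \<le> sqrt (M\<^sup>2 * s)" by (rule real_sqrt_le_mono)
        also have "\<dots> = sqrt s * M" using less.prems(2) by (simp add: real_sqrt_mult)
        finally show ?thesis .
      qed
      then have "K * sqrt (\<Sum>b\<in>C. (n b)\<^sup>2) \<le> K * (sqrt s * M)" using K by (rule mult_left_mono)
      finally show ?thesis .
    qed
    have fR: "f R = f C + f (R - C)" using add[rule_format, of C "R - C"] C(1)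
      by (simp add: Un_absorb1 Un_Diff_cancel)
    have sumsplit: "(\<Sum>b\<in>R. \<omega> b * n b) = (\<Sum>b\<in>C. \<omega> b * n b) + (\<Sum>b\<in>R-C. \<omega> b * n b)"
      using C(1) by (simp add: sum.subset_diff[of C R])
    show ?thesis
    proof (cases "R - C = {}")
      case True
      then have "f R = f C" using fR f0 by (metis add.right_neutral)
      moreover have "0 \<le> K * (2 / sqrt s * (\<Sum>b\<in>R. \<omega> b * n b))"
        using K sumR0 s by (intro mult_nonneg_nonneg) auto
      ultimately show ?thesis using fC by (simp add: distrib_left)
    next
      case False
      define m where "m = Min ((\<lambda>b. n b / \<omega> b) ` C)"
      have big: "s / 2 < wset \<omega> C" using C(4) False by auto
      have m0: "0 \<le> m" and msq: "sqrt s * m \<le> 2 / sqrt s * (\<Sum>b\<in>C. \<omega> b * n b)"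
        using min_chunk[OF C(5) s om0 nn big] unfolding m_def by auto
      have mge: "\<forall>c\<in>R - C. n c / \<omega> c \<le> m"
        unfolding m_def using C(3) C(5) by (auto intro!: Min.boundedI)
      have card: "card (R - C) < card R"
        using C(1) C(5) by (metis Diff_subset card_seteq finite Diff_empty Diff_eq_empty_iff
            double_diff subset_refl psubsetI psubset_card_mono order_refl Diff_cancel)
      have IH: "\<bar>f (R - C)\<bar> \<le> K * (sqrt s * m + 2 / sqrt s * (\<Sum>b\<in>R-C. \<omega> b * n b))"
        using less.hyps[OF card, of m] less.prems(1) m0 mge by auto
      have "\<bar>f R\<bar> \<le> \<bar>f C\<bar> + \<bar>f (R - C)\<bar>" using fR by simp
      also have "\<dots> \<le> K * (sqrt s * M) + K * (sqrt s * m + 2 / sqrt s * (\<Sum>b\<in>R-C. \<omega> b * n b))"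
        using fC IH by simp
      also have "\<dots> \<le> K * (sqrt s * M) + K * (2 / sqrt s * (\<Sum>b\<in>C. \<omega> b * n b) + 2 / sqrt s * (\<Sum>b\<in>R-C. \<omega> b * n b))"
        using msq K by (intro add_left_mono mult_left_mono) auto
      also have "\<dots> = K * (sqrt s * M + 2 / sqrt s * (\<Sum>b\<in>R. \<omega> b * n b))"
        by (simp add: sumsplit algebra_simps)
      finally show ?thesis .
    qed
  qed
qed

lemma rearr:
  fixes c r al N be S :: real
  assumes "c \<noteq> 0" "r \<noteq> 0"
  shows "(al * N + be / r * S) / c = (be / c) / r * S + al / c * N"
  using assms by (simp add: field_simps)

theorem mainTheorem6:
  fixes A :: "real ^ 'n ^ 'm" and blk :: "'n \<Rightarrow> 'b::finite"
    and \<omega> :: "'b \<Rightarrow> real" and s :: real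
  assumes "block_structure blk"
    and "\<forall>b. 1 \<le> \<omega> b"
    and "s \<ge> 2 * (wmax \<omega>)\<^sup>2"
    and "wbrip blk \<omega> A (2 * s) (wbrip_const blk \<omega> A (2 * s))"
    and "wbrip_const blk \<omega> A (2 * s) < 1 / (2 * sqrt 2 + 1)"
  shows "brnsp blk \<omega> 2 A s
           (2 * sqrt 2 * wbrip_const blk \<omega> A (2 * s) / (1 - wbrip_const blk \<omega> A (2 * s)))
           (sqrt (1 + wbrip_const blk \<omega> A (2 * s)) / (1 - wbrip_const blk \<omega> A (2 * s)))"
proof -
  define \<delta> where "\<delta> = wbrip_const blk \<omega> A (2 * s)"
  have d0: "0 < \<delta>" and d1: "\<delta> < 1" and rip: "wbrip_ineq blk \<omega> A (2 * s) \<delta>"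
    using assms(4) unfolding wbrip_def \<delta>_def by auto
  have dsmall: "\<delta> < 1 / (2 * sqrt 2 + 1)" using assms(5) unfolding \<delta>_def .
  have om1: "\<forall>b. 1 \<le> \<omega> b" using assms(2) .
  have om0: "\<forall>b. 0 < \<omega> b" using om1 by (auto intro: less_le_trans[of 0 1])
  have omax: "\<omega> b \<le> wmax \<omega>" for b unfolding wmax_def by (rule Max_ge) auto
  have oms: "\<forall>b. (\<omega> b)\<^sup>2 \<le> s / 2"
  proof
    fix b
    have "(\<omega> b)\<^sup>2 \<le> (wmax \<omega>)\<^sup>2" using omax[of b] om0 by (intro power_mono) (auto simp: less_imp_le)
    then show "(\<omega> b)\<^sup>2 \<le> s / 2" using assms(3) by linarith
  qed
  have s0: "0 < s"
  proof -
    have "1 \<le> (\<omega> undefined)\<^sup>2" using om1 by (simp add: one_le_power)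
    then show ?thesis using oms[rule_format, of undefined] by linarith
  qed
  have ssq: "s powr (1 - 1 / 2) = sqrt s" using s0 by (simp add: powr_half_sqrt)
  have rho_lt: "2 * sqrt 2 * \<delta> / (1 - \<delta>) < 1"
  proof -
    have pos: "0 < 2 * sqrt 2 + 1" by (simp add: add_pos_pos)
    have "\<delta> * (2 * sqrt 2 + 1) < 1" using dsmall pos by (simp add: less_divide_eq)
    then have "2 * sqrt 2 * \<delta> < 1 - \<delta>" by (simp add: algebra_simps)
    then show ?thesis using d1 by (simp add: divide_less_eq)
  qed
  have main: "norm (brestrict blk S x) \<le>
      (2 * sqrt 2 * \<delta> / (1 - \<delta>)) / sqrt s * (\<Sum>b\<in>-S. \<omega> b * bnorm blk x b)
       + sqrt (1 + \<delta>) / (1 - \<delta>) * norm (A *v x)"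
    if wS: "wset \<omega> S \<le> s" for x S
  proof -
    define n where "n b = bnorm blk x b" for b
    have nn: "\<forall>b. 0 \<le> n b" by (simp add: n_def bnorm_nonneg)
    have "\<exists>C \<subseteq> -S. sum (\<lambda>b. (\<omega> b)\<^sup>2) C \<le> s \<and> (\<forall>b\<in>C. \<forall>c\<in>-S-C. n c / \<omega> c \<le> n b / \<omega> b) \<and>
           (-S - C \<noteq> {} \<longrightarrow> s - s/2 < sum (\<lambda>b. (\<omega> b)\<^sup>2) C) \<and> (-S \<noteq> {} \<longrightarrow> C \<noteq> {})"
      by (rule chunk) (use oms s0 in auto)
    then obtain S1 where S1: "S1 \<subseteq> -S" "wset \<omega> S1 \<le> s" "\<forall>b\<in>S1. \<forall>c\<in>-S-S1. n c / \<omega> c \<le> n b / \<omega> b"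
      "-S - S1 \<noteq> {} \<longrightarrow> s / 2 < wset \<omega> S1" "-S \<noteq> {} \<longrightarrow> S1 \<noteq> {}"
      unfolding wset_def by auto
    define R0 where "R0 = -S - S1"
    define U where "U = S \<union> S1"
    define u where "u = brestrict blk U x"
    define xs where "xs = brestrict blk S x"
    define x1 where "x1 = brestrict blk S1 x"
    have SS1: "S \<inter> S1 = {}" using S1(1) by auto
    have wU: "wset \<omega> U \<le> 2 * s" using wset_union[of \<omega> S S1] wS S1(2) unfolding U_def by linarith
    have u_split: "u = xs + x1" unfolding u_def xs_def x1_def U_def by (simp only: brestrict_add[OF SS1])
    have x_split: "x = u + brestrict blk R0 x"
    proof -
      have "U \<inter> R0 = {}" "U \<union> R0 = UNIV" unfolding U_def R0_def by auto
      then show ?thesis unfolding u_def using brestrict_add[of U R0 blk x] brestrict_UNIV[of blk x] by simp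
    qed
    have nu2: "(norm u)\<^sup>2 = (norm xs)\<^sup>2 + (norm x1)\<^sup>2"
      unfolding u_def xs_def x1_def norm_brestrict_sq U_def using SS1 by (simp add: sum.union_disjoint)
    have xs_le: "norm xs \<le> norm u"
    proof -
      have "(norm xs)\<^sup>2 \<le> (norm u)\<^sup>2" using nu2 by simp
      then show ?thesis by (simp add: power2_le_iff_abs_le)
    qed
    have sum_le: "norm xs + norm x1 \<le> sqrt 2 * norm u"
    proof -
      have d: "0 \<le> (norm xs - norm x1)\<^sup>2" by simp
      have "(norm xs + norm x1)\<^sup>2 \<le> 2 * (norm u)\<^sup>2"
        using d nu2 unfolding power2_sum power2_diff by linarith
      then have "norm xs + norm x1 \<le> sqrt (2 * (norm u)\<^sup>2)" by (rule real_le_rsqrt)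
      also have "\<dots> = sqrt 2 * norm u" by (simp add: real_sqrt_mult)
      finally show ?thesis .
    qed
    define K where "K = \<delta> * sqrt 2 * norm u"
    have K0: "0 \<le> K" unfolding K_def using d0 by simp
    define f where "f C = inner (A *v u) (A *v brestrict blk C x)" for C
    have fadd: "\<forall>C D. C \<inter> D = {} \<longrightarrow> f (C \<union> D) = f C + f D"
    proof (intro allI impI)
      fix C D :: "'b set" assume "C \<inter> D = {}"
      then have "brestrict blk (C \<union> D) x = brestrict blk C x + brestrict blk D x" by (simp add: brestrict_add)
      then show "f (C \<union> D) = f C + f D" unfolding f_def by (simp add: matrix_vector_right_distrib inner_add_right)
    qed
    have fbnd: "\<forall>C. C \<subseteq> R0 \<and> wset \<omega> C \<le> s \<longrightarrow> \<bar>f C\<bar> \<le> K * sqrt (\<Sum>b\<in>C. (n b)\<^sup>2)"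
    proof (intro allI impI)
      fix C assume C: "C \<subseteq> R0 \<and> wset \<omega> C \<le> s"
      define xc where "xc = brestrict blk C x"
      have d1': "S \<inter> C = {}" "S1 \<inter> C = {}" using C unfolding R0_def by auto
      have w1: "wset \<omega> (S \<union> C) \<le> 2 * s" using wset_union[of \<omega> S C] wS C by linarith
      have w2: "wset \<omega> (S1 \<union> C) \<le> 2 * s" using wset_union[of \<omega> S1 C] S1(2) C by linarith
      have p1: "\<bar>inner (A *v xs) (A *v xc)\<bar> \<le> \<delta> * norm xs * norm xc"
        unfolding xs_def xc_def by (rule rip_pair[OF rip d1'(1) w1])
      have p2: "\<bar>inner (A *v x1) (A *v xc)\<bar> \<le> \<delta> * norm x1 * norm xc"
        unfolding x1_def xc_def by (rule rip_pair[OF rip d1'(2) w2])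
      have "f C = inner (A *v xs) (A *v xc) + inner (A *v x1) (A *v xc)"
        unfolding f_def xc_def u_split by (simp add: matrix_vector_right_distrib inner_add_left)
      then have "\<bar>f C\<bar> \<le> \<delta> * norm xs * norm xc + \<delta> * norm x1 * norm xc" using p1 p2 by linarith
      also have "\<dots> = \<delta> * norm xc * (norm xs + norm x1)" by (simp add: algebra_simps)
      also have "\<dots> \<le> \<delta> * norm xc * (sqrt 2 * norm u)"
        using sum_le d0 by (intro mult_left_mono) auto
      also have "\<dots> = K * norm xc" unfolding K_def by (simp add: algebra_simps)
      also have "norm xc = sqrt (\<Sum>b\<in>C. (n b)\<^sup>2)" unfolding xc_def n_def by (rule norm_brestrict)
      finally show "\<bar>f C\<bar> \<le> K * sqrt (\<Sum>b\<in>C. (n b)\<^sup>2)" .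
    qed
    have fR0: "\<bar>f R0\<bar> \<le> K * (2 / sqrt s * (\<Sum>b\<in>-S. \<omega> b * n b))"
    proof -
      have split: "(\<Sum>b\<in>-S. \<omega> b * n b) = (\<Sum>b\<in>S1. \<omega> b * n b) + (\<Sum>b\<in>R0. \<omega> b * n b)"
        unfolding R0_def using S1(1) by (simp add: sum.subset_diff[of S1 "-S"])
      have nonneg: "0 \<le> (\<Sum>b\<in>S1. \<omega> b * n b)" "0 \<le> (\<Sum>b\<in>R0. \<omega> b * n b)"
        using om0 nn by (auto intro!: sum_nonneg simp: less_imp_le)
      show ?thesis
      proof (cases "R0 = {}")
        case True
        then have "f R0 = 0" unfolding f_def by (simp add: brestrict_empty)
        moreover have "0 \<le> K * (2 / sqrt s * (\<Sum>b\<in>-S. \<omega> b * n b))"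
          using K0 s0 nonneg split by (intro mult_nonneg_nonneg) auto
        ultimately show ?thesis by simp
      next
        case False
        then have ne: "S1 \<noteq> {}" and big: "s / 2 < wset \<omega> S1" using S1(4,5) unfolding R0_def by auto
        define m where "m = Min ((\<lambda>b. n b / \<omega> b) ` S1)"
        have m0: "0 \<le> m" and msq: "sqrt s * m \<le> 2 / sqrt s * (\<Sum>b\<in>S1. \<omega> b * n b)"
          using min_chunk[OF ne s0 om0 nn big] unfolding m_def by auto
        have mge: "\<forall>c\<in>R0. n c / \<omega> c \<le> m"
          unfolding m_def R0_def using S1(3) ne by (auto intro!: Min.boundedI)
        have "\<bar>f R0\<bar> \<le> K * (sqrt s * m + 2 / sqrt s * (\<Sum>b\<in>R0. \<omega> b * n b))"
          by (rule Gbound[OF fadd fbnd K0 om1 nn s0 oms _ m0 mge]) simp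
        also have "\<dots> \<le> K * (2 / sqrt s * (\<Sum>b\<in>S1. \<omega> b * n b) + 2 / sqrt s * (\<Sum>b\<in>R0. \<omega> b * n b))"
          using msq K0 by (intro mult_left_mono) auto
        also have "\<dots> = K * (2 / sqrt s * (\<Sum>b\<in>-S. \<omega> b * n b))" by (simp add: split algebra_simps)
        finally show ?thesis .
      qed
    qed
    have spu: "wsparsity blk \<omega> u \<le> 2 * s"
      using wsparsity_le[of blk U u \<omega>] wU unfolding u_def by (auto simp: brestrict_def)
    have lowr: "(1 - \<delta>) * (norm u)\<^sup>2 \<le> (norm (A *v u))\<^sup>2" and upr: "(norm (A *v u))\<^sup>2 \<le> (1 + \<delta>) * (norm u)\<^sup>2"
      using rip spu unfolding wbrip_ineq_def by auto
    have Au_le: "norm (A *v u) \<le> sqrt (1 + \<delta>) * norm u"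
    proof -
      have "norm (A *v u) \<le> sqrt ((1 + \<delta>) * (norm u)\<^sup>2)" using upr by (rule real_le_rsqrt)
      also have "\<dots> = sqrt (1 + \<delta>) * norm u" by (simp add: real_sqrt_mult)
      finally show ?thesis .
    qed
    have eq: "(norm (A *v u))\<^sup>2 = inner (A *v u) (A *v x) - f R0"
    proof -
      have "A *v x = A *v u + A *v brestrict blk R0 x" using x_split by (metis matrix_vector_right_distrib)
      then show ?thesis unfolding f_def power2_norm_eq_inner by (simp add: inner_add_right)
    qed
    have cs: "inner (A *v u) (A *v x) \<le> sqrt (1 + \<delta>) * norm u * norm (A *v x)"
    proof -
      have "inner (A *v u) (A *v x) \<le> norm (A *v u) * norm (A *v x)" by (rule norm_cauchy_schwarz)
      also have "\<dots> \<le> sqrt (1 + \<delta>) * norm u * norm (A *v x)" using Au_le by (intro mult_right_mono) auto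
      finally show ?thesis .
    qed
    define \<Sigma> where "\<Sigma> = (\<Sum>b\<in>-S. \<omega> b * n b)"
    define Z where "Z = sqrt (1 + \<delta>) * norm (A *v x) + 2 * sqrt 2 * \<delta> / sqrt s * \<Sigma>"
    have Sig0: "0 \<le> \<Sigma>" unfolding \<Sigma>_def using om0 nn by (auto intro!: sum_nonneg simp: less_imp_le)
    have Z0: "0 \<le> Z" unfolding Z_def using Sig0 d0 s0 by (intro add_nonneg_nonneg) auto
    have key: "(1 - \<delta>) * (norm u)\<^sup>2 \<le> norm u * Z"
    proof -
      have "(1 - \<delta>) * (norm u)\<^sup>2 \<le> sqrt (1 + \<delta>) * norm u * norm (A *v x) + K * (2 / sqrt s * \<Sigma>)"
        using lowr eq cs fR0 unfolding \<Sigma>_def by linarith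
      also have "\<dots> = norm u * Z" unfolding Z_def K_def by (simp add: algebra_simps)
      finally show ?thesis .
    qed
    have u_le: "norm u \<le> Z / (1 - \<delta>)"
    proof (cases "norm u = 0")
      case True
      then show ?thesis using Z0 d1 by simp
    next
      case False
      then have pos: "0 < norm u" by simp
      have "norm u * ((1 - \<delta>) * norm u) \<le> norm u * Z" using key by (simp add: power2_eq_square algebra_simps)
      then have "(1 - \<delta>) * norm u \<le> Z" using pos by (simp add: mult_le_cancel_left_pos)
      then show ?thesis using d1 by (simp add: le_divide_eq algebra_simps)
    qed
    have "Z / (1 - \<delta>) = (2 * sqrt 2 * \<delta> / (1 - \<delta>)) / sqrt s * \<Sigma> + sqrt (1 + \<delta>) / (1 - \<delta>) * norm (A *v x)"
      unfolding Z_def using rearr[of "1 - \<delta>" "sqrt s" "sqrt (1 + \<delta>)" "norm (A *v x)" "2 * sqrt 2 * \<delta>" \<Sigma>] d1 s0 by simp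
    then show ?thesis using xs_le u_le unfolding xs_def \<Sigma>_def n_def by linarith
  qed
  show ?thesis
    unfolding \<delta>_def[symmetric] brnsp_def
  proof (intro conjI allI impI)
    show "0 < 2 * sqrt 2 * \<delta> / (1 - \<delta>)" using d0 d1 by simp
    show "2 * sqrt 2 * \<delta> / (1 - \<delta>) < 1" by (rule rho_lt)
    show "0 < sqrt (1 + \<delta>) / (1 - \<delta>)" using d0 d1 by simp
    fix x S assume wS: "wset \<omega> S \<le> s"
    show "wnorm blk \<omega> 2 (brestrict blk S x) \<le> 2 * sqrt 2 * \<delta> / (1 - \<delta>) / s powr (1 - 1 / 2) *
          wnorm blk \<omega> 1 (brestrict blk (- S) x) + sqrt (1 + \<delta>) / (1 - \<delta>) * norm (A *v x)"
      unfolding wnorm2[OF om0] wnorm1[OF om0] ssq using main[OF wS] .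
  qed
qed

end
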